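(* Let $q$ be a prime power and $d\ge 3$. Let $\mathbb{F}_q[x,y]_d$ be the vector space of binary forms of degree $d$ over $\mathbb{F}_q$ (including $0$), and let \[ B_d=\{f\in\mathbb{F}_q[x,y]_d : f \text{ has a double root in } \mathbb{P}^1(\overline{\mathbb{F}}_q)\}, \] where by convention $0\in B_d$. Then $\#B_d=q^d+q^{d-1}-q^{d-2}$.
   Context: A binary form $f$ has a double root at a point of $\mathbb{P}^1(\overline{\mathbb{F}}_q)$ if the corresponding linear form divides $f$ at least twice over $\overline{\mathbb{F}}_q$; i.e. $B_d$ is the set of binary forms of degree $d$ which are not square-free, with $0$ regarded as not square-free. *)

theory Defs
  imports "HOL-Library.Cardinality" "HOL-Computational_Algebra.Polynomial" "HOL-Algebra.Algebraic_Closure_Type"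
begin

(* A binary form of degree d over a field K, f = \<Sum>_{i\<le>d} c_i x^i y^(d-i),
   is encoded by the univariate polynomial \<Sum>_{i\<le>d} c_i X^i of degree \<le> d
   (the form 0 is the zero polynomial).  Under this encoding the product of a form
   of degree m with a form of degree n is the polynomial product (degree m+n). *)
definition binary_forms :: "nat \<Rightarrow> 'a::zero poly set" where
  "binary_forms d = {f. degree f \<le> d}"

(* The linear form b x - a y over the algebraic closure (with (a,b) \<noteq> (0,0)),
   i.e. the point [a:b] of P^1, is encoded by [:-a, b:].  A degree-d form f has a double
   root in P^1(algebraic closure) iff for some such linear form l, l^2 divides f in
   the ring of binary forms over the algebraic closure, i.e. f = l^2 * g for a
   form g of degree d-2. *)
definition has_double_root :: "nat \<Rightarrow> 'a::field poly \<Rightarrow> bool" where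
  "has_double_root d f \<longleftrightarrow>
     (\<exists>a b :: 'a alg_closure. (a, b) \<noteq> (0, 0) \<and>
        (\<exists>g. degree g \<le> d - 2 \<and> map_poly to_ac f = [:-a, b:]^2 * g))"

definition B :: "nat \<Rightarrow> 'a::field poly set" where
  "B d = {f \<in> binary_forms d. has_double_root d f}"

end

theory Submission
  imports Defs "HOL-Computational_Algebra.Primes"
begin


abbreviation M :: "'a::field poly \<Rightarrow> 'a alg_closure poly" where
  "M p \<equiv> map_poly to_ac p"

lemma coeff_M: "coeff (M p) n = to_ac (coeff p n)"
  by (simp add: coeff_map_poly)

lemma M_add: "M (p + q) = M p + M q"
  by (rule poly_eqI) (simp add: coeff_M)

lemma M_mult: "M (p * q) = M p * M q"
  by (rule poly_eqI) (simp add: coeff_M coeff_mult to_ac_sum)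

lemma M_power: "M (p ^ n) = M p ^ n"
  by (induction n) (simp_all add: M_mult)

lemma M_pderiv: "M (pderiv p) = pderiv (M p)"
  by (rule poly_eqI) (simp add: coeff_M coeff_pderiv)

lemma degree_M [simp]: "degree (M p) = degree p"
  by (rule degree_map_poly) simp

lemma M_eq_0_iff [simp]: "M p = 0 \<longleftrightarrow> p = 0"
  by (metis coeff_M leading_coeff_0_iff degree_M to_ac_eq_0_iff)

lemma M_dvd: "p dvd q \<Longrightarrow> M p dvd M q"
  by (auto simp: M_mult)

lemma CHAR_finite_field: "prime CHAR('a::{finite,field})"
  by (rule prime_CHAR_semidom) (rule finite_imp_CHAR_pos, simp)

lemma frob_surj:
  fixes y :: "'a::{finite,field}"
  shows "\<exists>x. x ^ CHAR('a) = y"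
proof -
  have pr: "prime CHAR('a)" by (rule CHAR_finite_field)
  have "inj (\<lambda>x::'a. x ^ CHAR('a))"
  proof (rule injI)
    fix x z :: 'a assume eq: "x ^ CHAR('a) = z ^ CHAR('a)"
    have "((x - z) + z) ^ CHAR('a) = (x - z) ^ CHAR('a) + z ^ CHAR('a)"
      by (rule freshmans_dream[OF pr refl])
    with eq have "(x - z) ^ CHAR('a) = 0" by simp
    then show "x = z" by simp
  qed
  then have "surj (\<lambda>x::'a. x ^ CHAR('a))"
    by (rule finite_UNIV_inj_surj[rotated]) simp
  then show ?thesis by (metis surjD)
qed

lemma pderiv_0_imp_power:
  fixes p :: "'a::{finite,field} poly"
  assumes "pderiv p = 0"
  shows "\<exists>h. p = h ^ CHAR('a)"
proof -
  define c where "c = CHAR('a)"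
  have pr: "prime c" unfolding c_def by (rule CHAR_finite_field)
  then have c0: "c > 0" by (simp add: prime_gt_0_nat)
  define r where "r = (\<lambda>y::'a. SOME x. x ^ c = y)"
  have r: "r y ^ c = y" for y
    unfolding r_def c_def by (rule someI_ex) (rule frob_surj)
  have cz: "coeff p i = 0" if "\<not> c dvd i" for i
  proof -
    from that have "i \<noteq> 0" by (metis dvd_0_right)
    then obtain j where j: "i = Suc j" by (cases i) auto
    have "coeff (pderiv p) j = 0" using assms by simp
    then have "of_nat i * coeff p i = 0" by (simp add: coeff_pderiv j)
    moreover have "of_nat i \<noteq> (0::'a)"
      using that by (simp add: of_nat_eq_0_iff_char_dvd c_def)
    ultimately show ?thesis by simp
  qed
  define h where "h = (\<Sum>j\<le>degree p. monom (r (coeff p (c * j))) j)"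
  have prp: "prime CHAR('a poly)" using pr by (simp add: c_def)
  have "h ^ c = (\<Sum>j\<le>degree p. monom (r (coeff p (c * j))) j ^ c)"
    unfolding h_def by (rule freshmans_dream_sum[OF prp]) (simp add: c_def)
  also have "\<dots> = (\<Sum>j\<le>degree p. monom (coeff p (c * j)) (j * c))"
    by (simp add: monom_power r)
  also have "\<dots> = p"
  proof (rule poly_eqI)
    fix i
    have "coeff (\<Sum>j\<le>degree p. monom (coeff p (c * j)) (j * c)) i
          = (\<Sum>j\<le>degree p. if j * c = i then coeff p (c * j) else 0)"
      by (simp add: coeff_sum coeff_monom)
    also have "\<dots> = coeff p i"
    proof (cases "c dvd i")
      case True
      then obtain k where k: "i = c * k" by auto
      have eq: "(j * c = i) \<longleftrightarrow> j = k" for j using c0 k by (simp add: mult.commute)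
      have s: "(\<Sum>j\<le>degree p. if j * c = i then coeff p (c * j) else 0)
             = (\<Sum>j\<le>degree p. if j = k then coeff p i else 0)"
        by (rule sum.cong) (use c0 in \<open>auto simp: eq k\<close>)
      show ?thesis
      proof (cases "k \<le> degree p")
        case True
        then show ?thesis by (simp add: s)
      next
        case False
        then have "degree p < i" using k c0
          by (metis dual_order.strict_trans1 le_square mult_le_mono1 not_le mult.commute
              One_nat_def Suc_leI mult_le_mono2 nat_mult_1)
        then have "coeff p i = 0" by (simp add: coeff_eq_0)
        then show ?thesis using False by (simp add: s)
      qed
    next
      case False
      then have "(j * c = i) = False" for j by auto
      then show ?thesis using cz[OF False] by simp
    qed
    finally show "coeff (\<Sum>j\<le>degree p. monom (coeff p (c * j)) (j * c)) i = coeff p i" .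
  qed
  finally show ?thesis unfolding c_def by metis
qed



definition NSF :: "'a::field poly \<Rightarrow> bool" where
  "NSF f \<longleftrightarrow> (\<exists>c. degree c > 0 \<and> c ^ 2 dvd f)"

definition minp :: "'a alg_closure \<Rightarrow> 'a::field poly \<Rightarrow> bool" where
  "minp \<alpha> m \<longleftrightarrow> m \<noteq> 0 \<and> poly (M m) \<alpha> = 0 \<and>
     (\<forall>h. h \<noteq> 0 \<and> poly (M h) \<alpha> = 0 \<longrightarrow> degree m \<le> degree h)"

lemma minp_exists:
  assumes "h \<noteq> 0" "poly (M h) \<alpha> = 0"
  shows "\<exists>m. minp \<alpha> m \<and> lead_coeff m = 1"
proof -
  have "\<exists>n. \<exists>h. h \<noteq> 0 \<and> poly (M h) \<alpha> = 0 \<and> degree h = n" using assms by blast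
  then obtain n where n: "\<exists>h. h \<noteq> 0 \<and> poly (M h) \<alpha> = 0 \<and> degree h = n"
    and least: "\<And>k. k < n \<Longrightarrow> \<not>(\<exists>h. h \<noteq> 0 \<and> poly (M h) \<alpha> = 0 \<and> degree h = k)"
    using exists_least_iff[of "\<lambda>n. \<exists>h. h \<noteq> 0 \<and> poly (M h) \<alpha> = 0 \<and> degree h = n"] by blast
  then obtain m where m: "m \<noteq> 0" "poly (M m) \<alpha> = 0" "degree m = n" by blast
  define m' where "m' = smult (inverse (lead_coeff m)) m"
  have "M m' = smult (to_ac (inverse (lead_coeff m))) (M m)"
    by (rule poly_eqI) (simp add: m'_def coeff_M)
  then have "poly (M m') \<alpha> = 0" using m by simp
  moreover have "m' \<noteq> 0" "degree m' = n" "lead_coeff m' = 1" using m by (auto simp: m'_def)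
  moreover have "degree m' \<le> degree h" if "h \<noteq> 0" "poly (M h) \<alpha> = 0" for h
    using least[of "degree h"] that \<open>degree m' = n\<close> by force
  ultimately show ?thesis unfolding minp_def by blast
qed

lemma minp_deg: "minp \<alpha> m \<Longrightarrow> degree m > 0"
proof (rule ccontr)
  assume a: "minp \<alpha> m" "\<not> degree m > 0"
  then have d: "degree (M m) = 0" by simp
  have "poly (M m) \<alpha> = poly [:coeff (M m) 0:] \<alpha>" using degree_0_id[OF d] by simp
  also have "\<dots> = to_ac (coeff m 0)" by (simp add: coeff_M)
  also have "coeff m 0 \<noteq> 0" using a by (metis leading_coeff_0_iff minp_def neq0_conv)
  then have "to_ac (coeff m 0) \<noteq> 0" by simp
  finally show False using a(1) by (simp add: minp_def)
qed

lemma minp_dvd: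
  assumes "minp \<alpha> m"
  shows "poly (M h) \<alpha> = 0 \<longleftrightarrow> m dvd h"
proof
  assume h: "poly (M h) \<alpha> = 0"
  have m0: "m \<noteq> 0" using assms by (simp add: minp_def)
  have "h = m * (h div m) + h mod m" by simp
  then have "M h = M m * M (h div m) + M (h mod m)" by (metis M_add M_mult)
  then have "poly (M (h mod m)) \<alpha> = 0" using h assms by (simp add: minp_def)
  show "m dvd h"
  proof (rule ccontr)
    assume "\<not> m dvd h"
    then have "h mod m \<noteq> 0" by (simp add: mod_eq_0_iff_dvd)
    then have "degree (h mod m) < degree m" using m0 by (rule degree_mod_less'[rotated])
    moreover have "degree m \<le> degree (h mod m)"
      using assms \<open>h mod m \<noteq> 0\<close> \<open>poly (M (h mod m)) \<alpha> = 0\<close> by (simp add: minp_def)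
    ultimately show False by simp
  qed
next
  assume "m dvd h"
  then obtain k where "h = m * k" by auto
  then show "poly (M h) \<alpha> = 0" using assms by (simp add: M_mult minp_def)
qed

lemma minp_prime:
  assumes "minp \<alpha> m" "m dvd u * v"
  shows "m dvd u \<or> m dvd v"
  using assms by (simp add: minp_dvd[symmetric] M_mult)

lemma minp_prime_pow:
  assumes "minp \<alpha> m" "m dvd u ^ n"
  shows "m dvd u"
  using assms(2)
proof (induction n)
  case 0
  then have "is_unit m" by simp
  moreover have "m \<noteq> 0" using assms(1) by (simp add: minp_def)
  ultimately have "degree m = 0" by (simp add: is_unit_iff_degree)
  with minp_deg[OF assms(1)] show ?case by simp
next
  case (Suc n)
  then have "m dvd u * u ^ n" by simp
  then have "m dvd u \<or> m dvd u ^ n" by (rule minp_prime[OF assms(1)])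
  then show ?case using Suc.IH by blast
qed

lemma double_root_imp_NSF:
  fixes f :: "'a::{finite,field} poly"
  assumes f0: "f \<noteq> 0" and dv: "[:-\<alpha>, 1:] ^ 2 dvd M f"
  shows "NSF f"
proof -
  have "poly (M f) \<alpha> = 0"
    using dv by (metis dvd_trans dvd_triv_left power2_eq_square poly_eq_0_iff_dvd)
  then obtain m where m: "minp \<alpha> m" "lead_coeff m = 1" using minp_exists f0 by blast
  have dm: "degree m > 0" using minp_deg[OF m(1)] .
  have "m dvd f" using m(1) \<open>poly (M f) \<alpha> = 0\<close> minp_dvd by blast
  then obtain s where s: "f = m * s" by auto
  show ?thesis
  proof (cases "poly (M s) \<alpha> = 0")
    case True
    then have "m dvd s" using minp_dvd m(1) by blast
    then have "m ^ 2 dvd f" using s by (simp add: power2_eq_square)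
    then show ?thesis using dm unfolding NSF_def by blast
  next
    case False
    have m0: "m \<noteq> 0" "s \<noteq> 0" using s f0 by auto
    have "2 \<le> order \<alpha> (M f)" using dv f0 by (simp add: order_divides)
    also have "order \<alpha> (M f) = order \<alpha> (M m) + order \<alpha> (M s)"
      using m0 by (simp add: s M_mult order_mult)
    also have "order \<alpha> (M s) = 0" using False by (rule order_0I)
    finally have "[:-\<alpha>, 1:] ^ 2 dvd M m" by (simp add: order_divides)
    define L where "L = [:-\<alpha>, 1:]"
    have L0: "poly L \<alpha> = 0" by (simp add: L_def)
    from \<open>[:-\<alpha>, 1:] ^ 2 dvd M m\<close> obtain k where "M m = L ^ 2 * k"
      unfolding L_def by (rule dvdE)
    then have k: "M m = L * (L * k)" by (simp add: power2_eq_square mult.assoc)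
    have "pderiv (M m) = L * pderiv (L * k) + (L * k) * pderiv L"
      by (simp only: k pderiv_mult)
    then have "poly (pderiv (M m)) \<alpha> = 0"
      by (simp only: poly_add poly_mult L0) simp
    then have "poly (M (pderiv m)) \<alpha> = 0" by (simp only: M_pderiv)
    then have "m dvd pderiv m" using minp_dvd[OF m(1)] by blast
    have "degree (pderiv m) < degree m"
    proof -
      have "degree (pderiv m) \<le> degree m - 1"
        by (rule degree_le) (auto simp: coeff_pderiv coeff_eq_0)
      then show ?thesis using dm by linarith
    qed
    have "pderiv m = 0"
    proof (rule ccontr)
      assume "pderiv m \<noteq> 0"
      then have "degree m \<le> degree (pderiv m)"
        using \<open>m dvd pderiv m\<close> by (rule dvd_imp_degree_le[rotated])
      with \<open>degree (pderiv m) < degree m\<close> show False by simp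
    qed
    then obtain h where h: "m = h ^ CHAR('a)" using pderiv_0_imp_power by blast
    have c2: "CHAR('a) \<ge> 2" using CHAR_finite_field[where 'a='a] prime_ge_2_nat by blast
    have h0: "h \<noteq> 0" using h m0 c2 by auto
    have "poly (M h) \<alpha> ^ CHAR('a) = 0"
      using m(1) by (simp add: h M_power minp_def poly_power)
    then have "poly (M h) \<alpha> = 0" by simp
    then have "degree m \<le> degree h" using m(1) h0 by (simp add: minp_def)
    moreover have "degree m = CHAR('a) * degree h" using h h0 by (simp add: degree_power_eq)
    ultimately show ?thesis using dm c2
      by (metis le_antisym mult_le_cancel2 nat_mult_1 not_numeral_le_zero one_le_numeral mult_0_right
          less_not_refl mult_le_mono1 numeral_le_one_iff semiring_norm(69) zero_less_iff_neq_zero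
          Suc_1 Suc_n_not_le_n le_trans mult.commute)

  qed
qed



lemma NSF_imp_double_root:
  fixes f :: "'a::field poly"
  assumes "NSF f"
  shows "\<exists>\<alpha>. [:-\<alpha>, 1:] ^ 2 dvd M f"
proof -
  obtain c where c: "degree c > 0" "c ^ 2 dvd f" using assms by (auto simp: NSF_def)
  have "degree (M c) > 0" using c by simp
  then obtain \<alpha> where "poly (M c) \<alpha> = 0" using alg_closed_imp_poly_has_root by blast
  then have "[:-\<alpha>, 1:] dvd M c" by (simp add: poly_eq_0_iff_dvd)
  then have "[:-\<alpha>, 1:] ^ 2 dvd M c ^ 2" by (rule dvd_power_same)
  also have "M c ^ 2 = M (c ^ 2)" by (simp add: M_power)
  also have "\<dots> dvd M f" using c(2) by (rule M_dvd)
  finally show ?thesis by blast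
qed

lemma has_double_root_iff:
  fixes f :: "'a::{finite,field} poly"
  assumes "degree f \<le> d" "d \<ge> 2"
  shows "has_double_root d f \<longleftrightarrow> degree f \<le> d - 2 \<or> NSF f"
proof
  assume "has_double_root d f"
  then obtain a b :: "'a alg_closure" and g where ab: "(a, b) \<noteq> (0, 0)" and g: "degree g \<le> d - 2"
    and eq: "M f = [:-a, b:] ^ 2 * g"
    unfolding has_double_root_def by blast
  show "degree f \<le> d - 2 \<or> NSF f"
  proof (cases "b = 0")
    case True
    then have a0: "a \<noteq> 0" using ab by simp
    have "M f = smult (a ^ 2) g" using eq True
      by (simp add: power2_eq_square)
    then have "degree (M f) = degree g" using a0 by simp
    then show ?thesis using g by simp
  next
    case False
    have s: "[:-a, b:] = smult b [:-(a/b), 1:]" using False by simp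
    have "M f = (smult b [:-(a/b), 1:]) ^ 2 * g" unfolding s[symmetric] by (rule eq)
    also have "\<dots> = smult (b ^ 2) ([:-(a/b), 1:] ^ 2 * g)"
      by (simp only: smult_power mult_smult_left)
    finally have "M f = smult (b ^ 2) ([:-(a/b), 1:] ^ 2 * g)" .
    then have dv: "[:-(a/b), 1:] ^ 2 dvd M f"
      by (metis dvd_smult dvd_triv_left)
    show ?thesis
    proof (cases "f = 0")
      case True then show ?thesis by simp
    next
      case False
      then show ?thesis using double_root_imp_NSF[OF False dv] by simp
    qed
  qed
next
  assume h: "degree f \<le> d - 2 \<or> NSF f"
  show "has_double_root d f"
  proof (cases "degree f \<le> d - 2")
    case True
    have "M f = [:-(-1), 0:] ^ 2 * M f" by (simp flip: one_pCons)
    then show ?thesis unfolding has_double_root_def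
      using True by (intro exI[of _ "-1"] exI[of _ 0] conjI exI[of _ "M f"]) simp_all
  next
    case False
    then have nsf: "NSF f" using h by simp
    have f0: "f \<noteq> 0" using False by auto
    obtain \<alpha> where "[:-\<alpha>, 1:] ^ 2 dvd M f" using NSF_imp_double_root[OF nsf] by blast
    then obtain k where k: "M f = [:-\<alpha>, 1:] ^ 2 * k" by (rule dvdE)
    have k0: "k \<noteq> 0" using k f0 by auto
    have "degree (M f) = 2 + degree k" using k k0 by (simp add: degree_mult_eq degree_power_eq)
    then have "degree k \<le> d - 2" using assms by simp
    then show ?thesis unfolding has_double_root_def
      using k by (intro exI[of _ \<alpha>] exI[of _ 1] conjI exI[of _ k]) simp_all
  qed
qed



lemma monic_deg0: "degree (a :: 'a::field poly) = 0 \<Longrightarrow> lead_coeff a = 1 \<Longrightarrow> a = 1"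
  by (metis degree_0_id one_pCons)

lemma NSF_dvd: "c ^ 2 dvd f \<Longrightarrow> \<not> NSF f \<Longrightarrow> degree c = 0"
  by (auto simp: NSF_def)

lemma decomp_unique:
  fixes a :: "'a::{finite,field} poly"
  shows "lead_coeff a = 1 \<Longrightarrow> lead_coeff a' = 1 \<Longrightarrow> \<not> NSF b \<Longrightarrow> \<not> NSF b' \<Longrightarrow>
         a ^ 2 * b = a' ^ 2 * b' \<Longrightarrow> a = a'"
proof (induction "degree a" arbitrary: a a' b b' rule: less_induct)
  case less
  show ?case
  proof (cases "degree a = 0")
    case True
    then have a1: "a = 1" using less.prems(1) by (rule monic_deg0)
    then have "a' ^ 2 dvd b" using less.prems(5) by simp
    then have "degree a' = 0" using less.prems(3) by (rule NSF_dvd)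
    then have "a' = 1" using less.prems(2) by (rule monic_deg0)
    then show ?thesis using a1 by simp
  next
    case False
    then have "degree (M a) > 0" by simp
    then obtain \<alpha> where r: "poly (M a) \<alpha> = 0" using alg_closed_imp_poly_has_root by blast
    have a0: "a \<noteq> 0" using less.prems(1) by auto
    obtain m where m: "minp \<alpha> m" "lead_coeff m = 1" using minp_exists[OF a0 r] by blast
    have m0: "m \<noteq> 0" using m(2) by auto
    have dm: "degree m > 0" using minp_deg[OF m(1)] .
    have "m dvd a" using minp_dvd[OF m(1)] r by blast
    then obtain a1 where a1: "a = m * a1" by (rule dvdE)
    have "m dvd a' ^ 2 * b'" unfolding less.prems(5)[symmetric] a1
      by (simp add: power2_eq_square mult.assoc)
    then have disj: "m dvd a' ^ 2 \<or> m dvd b'" by (rule minp_prime[OF m(1)])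
    show ?thesis
    proof (cases "m dvd a'")
      case True
      then obtain a2 where a2: "a' = m * a2" by (rule dvdE)
      have "m ^ 2 * (a1 ^ 2 * b) = m ^ 2 * (a2 ^ 2 * b')"
        using less.prems(5) unfolding a1 a2 by (simp add: power_mult_distrib mult.assoc)
      then have eq: "a1 ^ 2 * b = a2 ^ 2 * b'" using m0 by simp
      have l1: "lead_coeff a1 = 1" using less.prems(1) m(2) unfolding a1 by (simp add: lead_coeff_mult)
      have l2: "lead_coeff a2 = 1" using less.prems(2) m(2) unfolding a2 by (simp add: lead_coeff_mult)
      have "a1 \<noteq> 0" using l1 by auto
      then have "degree a = degree m + degree a1" unfolding a1 using m0 by (simp add: degree_mult_eq)
      then have "degree a1 < degree a" using dm by simp
      then have "a1 = a2" using less.hyps l1 l2 less.prems(3,4) eq by blast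
      then show ?thesis using a1 a2 by simp
    next
      case False
      then have nd: "\<not> m dvd a' ^ 2" using minp_prime_pow[OF m(1)] by blast
      then have "m dvd b'" using disj by blast
      then obtain b1 where b1: "b' = m * b1" by (rule dvdE)
      have "m * (m * (a1 ^ 2 * b)) = m * (a' ^ 2 * b1)"
        using less.prems(5) unfolding a1 b1 by (simp add: power2_eq_square mult_ac)
      then have "m * (a1 ^ 2 * b) = a' ^ 2 * b1" using m0 by simp
      then have "m dvd a' ^ 2 * b1" by (metis dvd_triv_left)
      then have "m dvd b1" using nd minp_prime[OF m(1)] by blast
      then have "m ^ 2 dvd b'" unfolding b1 by (simp add: power2_eq_square)
      then have "degree m = 0" using less.prems(4) by (rule NSF_dvd)
      then show ?thesis using dm by simp
    qed
  qed
qed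

lemma decomp_exists:
  fixes f :: "'a::field poly"
  shows "lead_coeff f = 1 \<Longrightarrow> \<exists>a b. lead_coeff a = 1 \<and> lead_coeff b = 1 \<and> \<not> NSF b \<and> f = a ^ 2 * b"
proof (induction "degree f" arbitrary: f rule: less_induct)
  case less
  show ?case
  proof (cases "NSF f")
    case False
    then show ?thesis using less.prems by (intro exI[of _ 1] exI[of _ f]) simp
  next
    case True
    then obtain c where c: "degree c > 0" "c ^ 2 dvd f" by (auto simp: NSF_def)
    have c0: "c \<noteq> 0" using c by auto
    define c' where "c' = smult (inverse (lead_coeff c)) c"
    have lc': "lead_coeff c' = 1" using c0 by (simp add: c'_def)
    have dc': "degree c' = degree c" using c0 by (simp add: c'_def)
    have "c' dvd c" unfolding c'_def using c0 by (simp add: smult_dvd_iff)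
    then have "c' ^ 2 dvd f" using c(2) by (meson dvd_power_same dvd_trans)
    then obtain g where g: "f = c' ^ 2 * g" by (rule dvdE)
    have f0: "f \<noteq> 0" using less.prems by auto
    have g0: "g \<noteq> 0" using g f0 by auto
    have c'0: "c' \<noteq> 0" using lc' by auto
    have lg: "lead_coeff g = 1" using less.prems lc' unfolding g by (simp add: lead_coeff_mult lead_coeff_power)
    have "degree f = 2 * degree c' + degree g" unfolding g using g0 c'0
      by (simp add: degree_mult_eq degree_power_eq)
    then have "degree g < degree f" using c(1) dc' by simp
    then obtain a b where ab: "lead_coeff a = 1" "lead_coeff b = 1" "\<not> NSF b" "g = a ^ 2 * b"
      using less.hyps lg by blast
    have "f = (c' * a) ^ 2 * b" unfolding g ab(4) by (simp add: power_mult_distrib mult.assoc)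
    moreover have "lead_coeff (c' * a) = 1" using lc' ab(1) by (simp add: lead_coeff_mult)
    ultimately show ?thesis using ab by blast
  qed
qed



definition Pl :: "nat \<Rightarrow> 'a::zero poly set" where
  "Pl n = {f. \<forall>i\<ge>n. coeff f i = 0}"

lemma Pl_0: "Pl 0 = {0}"
  by (auto simp: Pl_def poly_eq_iff)

lemma Pl_Suc: "Pl (Suc n) = (\<lambda>(a, g). pCons a g) ` (UNIV \<times> Pl n)"
proof (rule Set.set_eqI)
  fix f :: "'a poly"
  show "f \<in> Pl (Suc n) \<longleftrightarrow> f \<in> (\<lambda>(a, g). pCons a g) ` (UNIV \<times> Pl n)"
  proof
    assume f: "f \<in> Pl (Suc n)"
    obtain a g where fg: "f = pCons a g" by (cases f) auto
    have "g \<in> Pl n" unfolding Pl_def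
    proof safe
      fix i assume "n \<le> i"
      then have "coeff f (Suc i) = 0" using f by (simp add: Pl_def)
      then show "coeff g i = 0" using fg by simp
    qed
    then show "f \<in> (\<lambda>(a, g). pCons a g) ` (UNIV \<times> Pl n)" using fg by auto
  next
    assume "f \<in> (\<lambda>(a, g). pCons a g) ` (UNIV \<times> Pl n)"
    then obtain a g where fg: "f = pCons a g" "g \<in> Pl n" by auto
    show "f \<in> Pl (Suc n)" unfolding Pl_def
    proof safe
      fix i assume "Suc n \<le> i"
      then obtain j where "i = Suc j" "n \<le> j" by (cases i) auto
      then show "coeff f i = 0" using fg by (simp add: Pl_def)
    qed
  qed
qed

lemma finite_card_Pl: "finite (Pl n :: 'a::{finite,zero} poly set) \<and> card (Pl n :: 'a poly set) = CARD('a) ^ n"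
proof (induction n)
  case 0
  then show ?case by (simp add: Pl_0)
next
  case (Suc n)
  have inj: "inj_on (\<lambda>(a, g). pCons a g) (UNIV \<times> (Pl n :: 'a poly set))"
    by (auto simp: inj_on_def)
  show ?case unfolding Pl_Suc using Suc
    by (simp add: card_image[OF inj] card_cartesian_product)
qed

lemma degree_le_Pl: "{f. degree f \<le> n} = Pl (Suc n)"
  by (auto simp: Pl_def coeff_eq_0 intro: degree_le)

definition Monic :: "nat \<Rightarrow> 'a::zero_neq_one poly set" where
  "Monic n = {f. degree f = n \<and> lead_coeff f = 1}"

lemma Monic_image: "Monic n = (\<lambda>g. g + monom 1 n) ` (Pl n :: 'a::comm_ring_1 poly set)"
proof (rule Set.set_eqI)
  fix f :: "'a poly"
  show "f \<in> Monic n \<longleftrightarrow> f \<in> (\<lambda>g. g + monom 1 n) ` Pl n"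
  proof
    assume f: "f \<in> Monic n"
    have "f - monom 1 n \<in> Pl n" unfolding Pl_def
    proof safe
      fix i assume "n \<le> i"
      then show "coeff (f - monom 1 n) i = 0" using f
        by (cases "i = n") (auto simp: Monic_def coeff_monom coeff_eq_0)
    qed
    then show "f \<in> (\<lambda>g. g + monom 1 n) ` Pl n" by (intro image_eqI[of _ _ "f - monom 1 n"]) auto
  next
    assume "f \<in> (\<lambda>g. g + monom 1 n) ` Pl n"
    then obtain g where g: "g \<in> Pl n" "f = g + monom 1 n" by auto
    have c: "coeff f i = (if i = n then 1 else if i > n then 0 else coeff g i)" for i
      using g by (auto simp: Pl_def coeff_monom)
    have "degree f \<le> n" by (rule degree_le) (simp add: c)
    moreover have "n \<le> degree f" by (rule le_degree) (simp add: c)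
    ultimately have "degree f = n" by simp
    then show "f \<in> Monic n" by (simp add: Monic_def c)
  qed
qed

lemma finite_card_Monic: "finite (Monic n :: 'a::{finite,comm_ring_1} poly set) \<and> card (Monic n :: 'a poly set) = CARD('a) ^ n"
proof -
  have inj: "inj_on (\<lambda>g. g + monom 1 n) (Pl n :: 'a poly set)" by (auto simp: inj_on_def)
  show ?thesis unfolding Monic_image using finite_card_Pl[where 'a='a, of n]
    by (simp add: card_image[OF inj])
qed

definition SFM :: "nat \<Rightarrow> 'a::field poly set" where
  "SFM n = {b \<in> Monic n. \<not> NSF b}"

lemma decomp_card:
  "card (Monic n :: 'a::{finite,field} poly set) =
     (\<Sum>k\<le>n div 2. CARD('a) ^ k * card (SFM (n - 2 * k) :: 'a poly set))"
proof -
  let ?S = "SIGMA k:{..n div 2}. ((Monic k :: 'a poly set) \<times> (SFM (n - 2 * k) :: 'a poly set))"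
  let ?F = "\<lambda>(k :: nat, a :: 'a poly, b :: 'a poly). a ^ 2 * b"
  have fin: "finite (SFM m :: 'a poly set)" for m
    using finite_card_Monic[where 'a='a, of m] by (simp add: SFM_def)
  have "bij_betw ?F ?S (Monic n)"
  proof (rule bij_betw_imageI)
    show "inj_on ?F ?S"
    proof (rule inj_onI)
      fix x y assume hx: "x \<in> ?S" and hy: "y \<in> ?S" and hF: "?F x = ?F y"
      obtain k a b where x: "x = (k, a, b)" by (cases x) auto
      obtain k' a' b' where y: "y = (k', a', b')" by (cases y) auto
      have h: "(k, a, b) \<in> ?S" "(k', a', b') \<in> ?S" "a ^ 2 * b = a' ^ 2 * b'"
        using hx hy hF x y by auto
      then have "a = a'" using decomp_unique[of a a' b b'] by (auto simp: Monic_def SFM_def)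
      moreover have "a \<noteq> 0" using h by (auto simp: Monic_def)
      ultimately have "b = b'" using h(3) by simp
      moreover have "k = k'" using h \<open>a = a'\<close> by (auto simp: Monic_def)
      ultimately show "x = y" using \<open>a = a'\<close> x y by simp
    qed
  next
    show "?F ` ?S = Monic n"
    proof (rule Set.set_eqI)
      fix f :: "'a poly"
      show "f \<in> ?F ` ?S \<longleftrightarrow> f \<in> Monic n"
      proof
        assume "f \<in> ?F ` ?S"
        then obtain k a b where kab: "k \<le> n div 2" "a \<in> Monic k" "b \<in> SFM (n - 2 * k)" "f = a ^ 2 * b"
          by auto
        have a0: "a \<noteq> 0" and b0: "b \<noteq> 0" using kab by (auto simp: Monic_def SFM_def)
        have "degree f = 2 * k + (n - 2 * k)" using kab a0 b0
          by (simp add: degree_mult_eq degree_power_eq Monic_def SFM_def)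
        also have "\<dots> = n" using kab(1) by simp
        finally have df: "degree f = n" .
        have "lead_coeff a = 1" "lead_coeff b = 1" using kab(2,3) by (auto simp: Monic_def SFM_def)
        then have "lead_coeff (a ^ 2 * b) = 1"
          by (simp only: lead_coeff_mult lead_coeff_power) simp
        then show "f \<in> Monic n" using df kab(4) by (simp add: Monic_def)
      next
        assume f: "f \<in> Monic n"
        then obtain a b where ab: "lead_coeff a = 1" "lead_coeff b = 1" "\<not> NSF b" "f = a ^ 2 * b"
          using decomp_exists[of f] by (auto simp: Monic_def)
        have a0: "a \<noteq> 0" and b0: "b \<noteq> 0" using ab by auto
        have dn: "n = 2 * degree a + degree b" using f ab a0 b0
          by (simp add: degree_mult_eq degree_power_eq Monic_def)
        have "(degree a, a, b) \<in> ?S" using dn ab by (auto simp: Monic_def SFM_def)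
        then show "f \<in> ?F ` ?S" using ab(4) by (intro image_eqI[of _ _ "(degree a, a, b)"]) auto
      qed
    qed
  qed
  then have "card (Monic n :: 'a poly set) = card ?S" by (rule bij_betw_same_card[symmetric])
  also have "\<dots> = (\<Sum>k\<le>n div 2. card ((Monic k :: 'a poly set) \<times> (SFM (n - 2 * k) :: 'a poly set)))"
    by (rule card_SigmaI) (auto simp: fin finite_card_Monic)
  also have "\<dots> = (\<Sum>k\<le>n div 2. CARD('a) ^ k * card (SFM (n - 2 * k) :: 'a poly set))"
    by (simp add: card_cartesian_product finite_card_Monic)
  finally show ?thesis .
qed



lemma SFM_card:
  assumes "n \<ge> 2"
  shows "card (SFM n :: 'a::{finite,field} poly set) + CARD('a) ^ (n - 1) = CARD('a) ^ n"
proof -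
  let ?q = "CARD('a)"
  let ?S = "\<lambda>m. card (SFM m :: 'a poly set)"
  obtain m where m: "n = m + 2" using assms by (metis add.commute le_Suc_ex)
  have nd: "n div 2 = Suc ((n - 2) div 2)" using m by simp
  have "?q ^ n = (\<Sum>k\<le>n div 2. ?q ^ k * ?S (n - 2 * k))"
    using decomp_card[where 'a='a, of n] finite_card_Monic[where 'a='a, of n] by simp
  also have "\<dots> = ?S n + (\<Sum>k\<le>(n - 2) div 2. ?q ^ Suc k * ?S (n - 2 * Suc k))"
    unfolding nd sum.atMost_Suc_shift by simp
  also have "(\<Sum>k\<le>(n - 2) div 2. ?q ^ Suc k * ?S (n - 2 * Suc k))
           = ?q * (\<Sum>k\<le>(n - 2) div 2. ?q ^ k * ?S ((n - 2) - 2 * k))"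
    by (simp add: sum_distrib_left m mult.assoc)
  also have "(\<Sum>k\<le>(n - 2) div 2. ?q ^ k * ?S ((n - 2) - 2 * k)) = ?q ^ (n - 2)"
    using decomp_card[where 'a='a, of "n - 2"] finite_card_Monic[where 'a='a, of "n - 2"] by simp
  also have "?q * ?q ^ (n - 2) = ?q ^ (n - 1)" using m by simp
  finally show ?thesis by simp
qed

lemma NSFM_card:
  assumes "n \<ge> 2"
  shows "card {f \<in> (Monic n :: 'a::{finite,field} poly set). NSF f} = CARD('a) ^ (n - 1)"
proof -
  have fin: "finite (Monic n :: 'a poly set)" using finite_card_Monic by blast
  have "Monic n = (SFM n :: 'a poly set) \<union> {f \<in> Monic n. NSF f}" by (auto simp: SFM_def)
  then have "CARD('a) ^ n = card (SFM n :: 'a poly set) + card {f \<in> (Monic n :: 'a poly set). NSF f}"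
    using fin finite_card_Monic[where 'a='a, of n]
    by (metis (no_types, lifting) card_Un_disjoint disjoint_iff finite_Un mem_Collect_eq SFM_def)
  then show ?thesis using SFM_card[OF assms, where 'a='a] by simp
qed

lemma NSF_smult: "c \<noteq> 0 \<Longrightarrow> NSF (smult c g) \<longleftrightarrow> NSF g"
  by (simp add: NSF_def dvd_smult_iff)

lemma deg_NSF_card:
  assumes "n \<ge> 2"
  shows "card {f :: 'a::{finite,field} poly. degree f = n \<and> NSF f} = (CARD('a) - 1) * CARD('a) ^ (n - 1)"
proof -
  let ?T = "{f \<in> (Monic n :: 'a poly set). NSF f}"
  let ?F = "\<lambda>(c, g). smult c (g :: 'a poly)"
  have "bij_betw ?F ((UNIV - {0}) \<times> ?T) {f. degree f = n \<and> NSF f}"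
  proof (rule bij_betw_imageI)
    show "inj_on ?F ((UNIV - {0}) \<times> ?T)"
    proof (rule inj_onI)
      fix x y assume hx: "x \<in> (UNIV - {0}) \<times> ?T" and hy: "y \<in> (UNIV - {0}) \<times> ?T" and hF: "?F x = ?F y"
      obtain c g where x: "x = (c, g)" by (cases x) auto
      obtain c' g' where y: "y = (c', g')" by (cases y) auto
      have l: "lead_coeff g = 1" "lead_coeff g' = 1" "c \<noteq> 0" "c' \<noteq> 0"
        using hx hy x y by (auto simp: Monic_def)
      have e: "smult c g = smult c' g'" using hF x y by simp
      then have "lead_coeff (smult c g) = lead_coeff (smult c' g')" by simp
      then have "c = c'" using l by simp
      then have "smult c (g - g') = 0" using e by (simp add: smult_diff_right)
      then have "g = g'" using l by simp
      then show "x = y" using x y \<open>c = c'\<close> by simp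
    qed
  next
    show "?F ` ((UNIV - {0}) \<times> ?T) = {f. degree f = n \<and> NSF f}"
    proof (rule Set.set_eqI)
      fix f :: "'a poly"
      show "f \<in> ?F ` ((UNIV - {0}) \<times> ?T) \<longleftrightarrow> f \<in> {f. degree f = n \<and> NSF f}"
      proof
        assume "f \<in> ?F ` ((UNIV - {0}) \<times> ?T)"
        then obtain c g where "c \<noteq> 0" "g \<in> ?T" "f = smult c g" by auto
        then show "f \<in> {f. degree f = n \<and> NSF f}" by (auto simp: Monic_def NSF_smult)
      next
        assume f: "f \<in> {f. degree f = n \<and> NSF f}"
        then have f0: "f \<noteq> 0" using assms by auto
        define g where "g = smult (inverse (lead_coeff f)) f"
        have "g \<in> ?T" using f f0 by (auto simp: g_def Monic_def NSF_smult)
        moreover have "f = smult (lead_coeff f) g" using f0 by (simp add: g_def)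
        moreover have "lead_coeff f \<noteq> 0" using f0 by simp
        ultimately show "f \<in> ?F ` ((UNIV - {0}) \<times> ?T)"
          by (intro image_eqI[of _ _ "(lead_coeff f, g)"]) auto
      qed
    qed
  qed
  then have "card {f :: 'a poly. degree f = n \<and> NSF f} = card ((UNIV - {0 :: 'a}) \<times> ?T)"
    by (rule bij_betw_same_card[symmetric])
  also have "\<dots> = (CARD('a) - 1) * CARD('a) ^ (n - 1)"
    using NSFM_card[OF assms, where 'a='a] by (simp add: card_cartesian_product card_Diff_subset)
  finally show ?thesis .
qed



theorem lemma4p1:
  assumes "d \<ge> 3"
  shows "card (B d :: 'a::{finite,field} poly set)
           = CARD('a) ^ d + CARD('a) ^ (d - 1) - CARD('a) ^ (d - 2)"
proof -
  let ?q = "CARD('a)"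
  let ?A = "{f :: 'a poly. degree f \<le> d - 2}"
  let ?C = "{f :: 'a poly. degree f = d - 1 \<and> NSF f}"
  let ?D = "{f :: 'a poly. degree f = d \<and> NSF f}"
  have Beq: "(B d :: 'a poly set) = ?A \<union> (?C \<union> ?D)"
  proof (rule Set.set_eqI)
    fix f :: "'a poly"
    show "f \<in> B d \<longleftrightarrow> f \<in> ?A \<union> (?C \<union> ?D)"
    proof (cases "degree f \<le> d")
      case True
      then show ?thesis using has_double_root_iff[OF True] assms
        by (auto simp: B_def binary_forms_def)
    next
      case False
      then show ?thesis by (auto simp: B_def binary_forms_def)
    qed
  qed
  have finP: "finite {f :: 'a poly. degree f \<le> n}" for n
    unfolding degree_le_Pl using finite_card_Pl by blast
  have fA: "finite ?A" by (rule finP)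
  have fC: "finite ?C" by (rule finite_subset[OF _ finP[of d]]) auto
  have fD: "finite ?D" by (rule finite_subset[OF _ finP[of d]]) auto
  have cA: "card ?A = ?q ^ (d - 1)"
    unfolding degree_le_Pl using finite_card_Pl[where 'a='a, of "Suc (d - 2)"] assms
    by (simp add: Suc_diff_Suc numeral_2_eq_2)
  have cC: "card ?C = (?q - 1) * ?q ^ (d - 2)"
    using deg_NSF_card[where 'a='a, of "d - 1"] assms by (simp add: numeral_2_eq_2)
  have cD: "card ?D = (?q - 1) * ?q ^ (d - 1)"
    using deg_NSF_card[where 'a='a, of d] assms by simp
  have cCD: "card (?C \<union> ?D) = card ?C + card ?D"
    by (rule card_Un_disjoint[OF fC fD]) (use assms in auto)
  have "card (B d :: 'a poly set) = card ?A + card (?C \<union> ?D)"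
    unfolding Beq by (rule card_Un_disjoint[OF fA]) (use fC fD assms in auto)
  also have "\<dots> = card ?A + (card ?C + card ?D)" by (simp only: cCD)
  also have "\<dots> = ?q ^ (d - 1) + ((?q - 1) * ?q ^ (d - 2) + (?q - 1) * ?q ^ (d - 1))"
    using cA cC cD by simp
  also have "\<dots> = ?q ^ d + ?q ^ (d - 1) - ?q ^ (d - 2)"
  proof -
    obtain e where e: "d = e + 3" using assms by (metis add.commute le_Suc_ex)
    obtain r where r: "?q = Suc r" using finite_UNIV_card_ge_0[where 'a='a] by (metis gr0_implies_Suc finite)
    define Q where "Q = Suc r ^ (e + 1)"
    have p1: "?q ^ (d - 2) = Q" by (simp add: e r Q_def)
    have p2: "?q ^ (d - 1) = Q * Suc r" by (simp add: e r Q_def)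
    have p3: "?q ^ d = Q * Suc r * Suc r" by (simp add: e r Q_def power_add eval_nat_numeral algebra_simps)
    show ?thesis unfolding p1 p2 p3 unfolding r by (simp add: algebra_simps)
  qed
  finally show ?thesis .
qed

end
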